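(* If $d: t\to_y^* u$ then $t\to_{y\neg gcv}^{k}\to_{ygcv}^{h} u$ where $k$ is the number of $\to_{y\neg gcv}$ steps in $d$ and $h$ is the number of $\to_{ygcv}$ steps in $d$.
   Context: Terms: $t ::= x \mid \lambda x.t \mid t\,u \mid t[x\backslash u]$ ($t[x\backslash u]$ an explicit substitution binding $x$ in $t$; terms up to $\alpha$). Values $v ::= \lambda x.t$. Substitution contexts $S ::= \langle\cdot\rangle\mid S[x\backslash u]$. For a class of contexts $K$, $K\langle\langle t\rangle\rangle$ is plugging without capture of free variables of $t$. Root rules: $S\langle\lambda x.t\rangle u\mapsto_m S\langle t[x\backslash u]\rangle$; $K\langle\langle x\rangle\rangle[x\backslash u]\mapsto_{e_K} K\langle\langle u\rangle\rangle[x\backslash u]$; $t[x\backslash S\langle v\rangle]\mapsto_{gcv} S\langle t\rangle$ if $x\notin\mathrm{fv}(t)$. Answers $a ::= v\mid a[x\backslash a']$; name contexts $N ::= \langle\cdot\rangle\mid N t\mid N[x\backslash t]$; auxiliary contexts $A ::= \langle\cdot\rangle\mid a[x\backslash A]\mid A[x\backslash t]$; silly contexts $Y ::= A\langle N\rangle$. $\to_{ym} := Y\langle\mapsto_m\rangle$; $\to_{yeAY} := A\langle\mapsto_{e_Y}\rangle$; $\to_{yeYN} := Y\langle\mapsto_{e_N}\rangle$; $\to_{ygcv}:=Y\langle\mapsto_{gcv}\rangle$; $\to_{y\neg gcv}:=\to_{ym}\cup\to_{yeAY}\cup\to_{yeYN}$; $\to_y := \to_{y\neg gcv}\cup\to_{ygcv}$.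 *)

theory Defs
  imports Main
begin

text \<open>Terms up to alpha-equivalence, in de Bruijn representation.
  Sub t u represents the explicit substitution t[x\u], where x is index 0 in t.\<close>
datatype trm = Var nat | Lam trm | App trm trm | Sub trm trm

fun lift :: "nat \<Rightarrow> nat \<Rightarrow> trm \<Rightarrow> trm" where
  "lift n k (Var i) = Var (if i < k then i else i + n)"
| "lift n k (Lam t) = Lam (lift n (Suc k) t)"
| "lift n k (App t u) = App (lift n k t) (lift n k u)"
| "lift n k (Sub t u) = Sub (lift n (Suc k) t) (lift n k u)"

fun fvs :: "trm \<Rightarrow> nat set" where
  "fvs (Var i) = {i}"
| "fvs (Lam t) = {i. Suc i \<in> fvs t}"
| "fvs (App t u) = fvs t \<union> fvs u"
| "fvs (Sub t u) = {i. Suc i \<in> fvs t} \<union> fvs u"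

fun is_value :: "trm \<Rightarrow> bool" where
  "is_value (Lam t) = True"
| "is_value _ = False"

datatype ctx = Hole | CLam ctx | CAppL ctx trm | CAppR trm ctx
  | CSubL ctx trm | CSubR trm ctx

text \<open>Plain plugging (may capture).\<close>
fun plug :: "ctx \<Rightarrow> trm \<Rightarrow> trm" where
  "plug Hole t = t"
| "plug (CLam C) t = Lam (plug C t)"
| "plug (CAppL C u) t = App (plug C t) u"
| "plug (CAppR u C) t = App u (plug C t)"
| "plug (CSubL C u) t = Sub (plug C t) u"
| "plug (CSubR u C) t = Sub u (plug C t)"

fun depth :: "ctx \<Rightarrow> nat" where
  "depth Hole = 0"
| "depth (CLam C) = Suc (depth C)"
| "depth (CAppL C u) = depth C"
| "depth (CAppR u C) = depth C"
| "depth (CSubL C u) = Suc (depth C)"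
| "depth (CSubR u C) = depth C"

text \<open>Capture-avoiding plugging K<<t>>: free variables of t refer to the outside of K.\<close>
definition plugnc :: "ctx \<Rightarrow> trm \<Rightarrow> trm" where
  "plugnc K t = plug K (lift (depth K) 0 t)"

fun ccomp :: "ctx \<Rightarrow> ctx \<Rightarrow> ctx" where
  "ccomp Hole D = D"
| "ccomp (CLam C) D = CLam (ccomp C D)"
| "ccomp (CAppL C u) D = CAppL (ccomp C D) u"
| "ccomp (CAppR u C) D = CAppR u (ccomp C D)"
| "ccomp (CSubL C u) D = CSubL (ccomp C D) u"
| "ccomp (CSubR u C) D = CSubR u (ccomp C D)"

inductive is_sctx :: "ctx \<Rightarrow> bool" where
  "is_sctx Hole"
| "is_sctx S \<Longrightarrow> is_sctx (CSubL S u)"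

inductive is_answer :: "trm \<Rightarrow> bool" where
  "is_answer (Lam t)"
| "is_answer a \<Longrightarrow> is_answer a' \<Longrightarrow> is_answer (Sub a a')"

inductive is_nctx :: "ctx \<Rightarrow> bool" where
  "is_nctx Hole"
| "is_nctx N \<Longrightarrow> is_nctx (CAppL N t)"
| "is_nctx N \<Longrightarrow> is_nctx (CSubL N t)"

inductive is_actx :: "ctx \<Rightarrow> bool" where
  "is_actx Hole"
| "is_answer a \<Longrightarrow> is_actx A \<Longrightarrow> is_actx (CSubR a A)"
| "is_actx A \<Longrightarrow> is_actx (CSubL A t)"

definition is_yctx :: "ctx \<Rightarrow> bool" where
  "is_yctx Y \<longleftrightarrow> (\<exists>A N. is_actx A \<and> is_nctx N \<and> Y = ccomp A N)"

definition root_m :: "trm \<Rightarrow> trm \<Rightarrow> bool" where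
  "root_m t u \<longleftrightarrow> (\<exists>S t0 u0. is_sctx S \<and>
      t = App (plug S (Lam t0)) u0 \<and> u = plug S (Sub t0 (lift (depth S) 0 u0)))"

text \<open>K<<x>>[x\u] -> K<<u>>[x\u], for K in the class P.  Inside Sub, x is index 0 and
  u must be lifted by one to pass the binder of the explicit substitution.\<close>
definition root_e :: "(ctx \<Rightarrow> bool) \<Rightarrow> trm \<Rightarrow> trm \<Rightarrow> bool" where
  "root_e P t u \<longleftrightarrow> (\<exists>K u0. P K \<and>
      t = Sub (plugnc K (Var 0)) u0 \<and> u = Sub (plugnc K (lift 1 0 u0)) u0)"

text \<open>t[x\S<v>] -> S<t> if x not free in t.\<close>
definition root_gcv :: "trm \<Rightarrow> trm \<Rightarrow> bool" where
  "root_gcv t u \<longleftrightarrow> (\<exists>S v t1. is_sctx S \<and> is_value v \<and> 0 \<notin> fvs t1 \<and>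
      (\<exists>t0. t1 = lift 1 0 t0 \<and>
        t = Sub t1 (plug S v) \<and> u = plug S (lift (depth S) 0 t0)))"

definition ctx_clos :: "(ctx \<Rightarrow> bool) \<Rightarrow> (trm \<Rightarrow> trm \<Rightarrow> bool) \<Rightarrow> trm \<Rightarrow> trm \<Rightarrow> bool" where
  "ctx_clos P R t u \<longleftrightarrow> (\<exists>C t' u'. P C \<and> R t' u' \<and> t = plug C t' \<and> u = plug C u')"

definition ym :: "trm \<Rightarrow> trm \<Rightarrow> bool" where
  "ym = ctx_clos is_yctx root_m"

definition yeAY :: "trm \<Rightarrow> trm \<Rightarrow> bool" where
  "yeAY = ctx_clos is_actx (root_e is_yctx)"

definition yeYN :: "trm \<Rightarrow> trm \<Rightarrow> bool" where
  "yeYN = ctx_clos is_yctx (root_e is_nctx)"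

definition ygcv :: "trm \<Rightarrow> trm \<Rightarrow> bool" where
  "ygcv = ctx_clos is_yctx root_gcv"

definition ynotgcv :: "trm \<Rightarrow> trm \<Rightarrow> bool" where
  "ynotgcv t u \<longleftrightarrow> ym t u \<or> yeAY t u \<or> yeYN t u"

definition ystep :: "trm \<Rightarrow> trm \<Rightarrow> bool" where
  "ystep t u \<longleftrightarrow> ynotgcv t u \<or> ygcv t u"

text \<open>A derivation d : t ->_y^* u, each step labelled by the sub-relation it uses:
  yder t u k h means there is such a derivation with k ->_{y not gcv} steps and
  h ->_{ygcv} steps.\<close>
inductive yder :: "trm \<Rightarrow> trm \<Rightarrow> nat \<Rightarrow> nat \<Rightarrow> bool" where
  yder_refl: "yder t t 0 0"
| yder_notgcv: "ynotgcv t s \<Longrightarrow> yder s u k h \<Longrightarrow> yder t u (Suc k) h"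
| yder_gcv: "ygcv t s \<Longrightarrow> yder s u k h \<Longrightarrow> yder t u k (Suc h)"

end

theory Submission
  imports Defs
begin

lemma lift_0[simp]: "lift 0 k t = t"
  by (induction t arbitrary: k) auto

lemma lift_lift: "lift m k (lift n k t) = lift (m+n) k t"
  by (induction t arbitrary: k) auto

lemma lift_comm: "lift n (Suc k) (lift 1 0 t) = lift 1 0 (lift n k t)"
proof -
  have "\<And>j. j \<le> k \<Longrightarrow> lift n (Suc k) (lift 1 j t) = lift 1 j (lift n k t)"
    by (induction t arbitrary: j k) auto
  then show ?thesis by simp
qed

lemma lift_comm1[simp]: "lift n (Suc k) (lift (Suc 0) 0 t) = lift (Suc 0) 0 (lift n k t)"
  using lift_comm by simp

lemma lift_inj: "lift n k a = lift n k b \<Longrightarrow> a = b"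
proof (induction a arbitrary: k b)
  case (Var x) then show ?case by (cases b) (auto split: if_splits)
next
  case (Lam a) then show ?case by (cases b) auto
next
  case (App a1 a2) then show ?case by (cases b) auto
next
  case (Sub a1 a2) then show ?case by (cases b) auto
qed

lemma fvs_lift: "i \<in> fvs (lift n k t) \<Longrightarrow> i < k \<or> k + n \<le> i"
  by (induction t arbitrary: k i) (fastforce split: if_splits)+

datatype md = MY | MA | MN

fun ansf :: "trm \<Rightarrow> bool" where
  "ansf (Lam t) = True"
| "ansf (Sub a b) = (ansf a \<and> ansf b)"
| "ansf _ = False"

lemma ans_eq: "is_answer t = ansf t"
proof
  show "is_answer t \<Longrightarrow> ansf t" by (induction rule: is_answer.induct) auto
  show "ansf t \<Longrightarrow> is_answer t"
    by (induction t) (auto intro: is_answer.intros)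
qed

lemma ansf_lift[simp]: "ansf (lift n k t) = ansf t"
  by (induction t arbitrary: k) auto

inductive cl :: "(trm \<Rightarrow> trm \<Rightarrow> bool) \<Rightarrow> md \<Rightarrow> trm \<Rightarrow> trm \<Rightarrow> bool" for R where
  cl_root: "R t u \<Longrightarrow> cl R m t u"
| cl_subl: "cl R m t u \<Longrightarrow> cl R m (Sub t w) (Sub u w)"
| cl_subr: "m \<noteq> MN \<Longrightarrow> ansf a \<Longrightarrow> cl R m t u \<Longrightarrow> cl R m (Sub a t) (Sub a u)"
| cl_appl: "m \<noteq> MA \<Longrightarrow> cl R MN t u \<Longrightarrow> cl R m (App t w) (App u w)"

inductive bm :: "trm \<Rightarrow> trm \<Rightarrow> trm \<Rightarrow> bool" where
  bm_lam: "bm (Lam b) w (Sub b w)"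
| bm_sub: "bm X (lift 1 0 w) Y \<Longrightarrow> bm (Sub X q) w (Sub Y q)"

definition rm' :: "trm \<Rightarrow> trm \<Rightarrow> bool" where
  "rm' t u \<longleftrightarrow> (\<exists>X w. t = App X w \<and> bm X w u)"

inductive hr :: "md \<Rightarrow> nat \<Rightarrow> trm \<Rightarrow> trm \<Rightarrow> trm \<Rightarrow> bool" where
  hr_var: "hr p i w (Var i) w"
| hr_subl: "hr p (Suc i) (lift 1 0 w) X X' \<Longrightarrow> hr p i w (Sub X q) (Sub X' q)"
| hr_subr: "p \<noteq> MN \<Longrightarrow> ansf a \<Longrightarrow> hr p i w X X' \<Longrightarrow> hr p i w (Sub a X) (Sub a X')"
| hr_appl: "p \<noteq> MA \<Longrightarrow> hr MN i w X X' \<Longrightarrow> hr p i w (App X q) (App X' q)"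

definition re' :: "md \<Rightarrow> trm \<Rightarrow> trm \<Rightarrow> bool" where
  "re' p t u \<longleftrightarrow> (\<exists>X X' q. t = Sub X q \<and> u = Sub X' q \<and> hr p 0 (lift 1 0 q) X X')"

definition gr :: "trm \<Rightarrow> trm \<Rightarrow> bool" where
  "gr t u \<longleftrightarrow> (\<exists>t0 S v. is_sctx S \<and> is_value v \<and> t = Sub (lift 1 0 t0) (plug S v)
      \<and> u = plug S (lift (depth S) 0 t0))"

fun rr :: "md option \<Rightarrow> trm \<Rightarrow> trm \<Rightarrow> bool" where
  "rr None = rm'"
| "rr (Some p) = re' p"

definition li :: "nat \<Rightarrow> nat \<Rightarrow> nat \<Rightarrow> nat" where
  "li k n i = (if i < k then i else i + n)"

lemma bm_lift: "bm X w Y \<Longrightarrow> bm (lift n k X) (lift n k w) (lift n k Y)"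
proof (induction arbitrary: k rule: bm.induct)
  case (bm_lam b w) then show ?case by (simp add: bm.bm_lam)
next
  case (bm_sub X w Y q) then show ?case
    using bm_sub.IH[of "Suc k"] by (simp add: bm.bm_sub)
qed

lemma bm_unlift: "bm X' w' Y \<Longrightarrow> X' = lift n k X \<Longrightarrow> w' = lift n k w \<Longrightarrow>
   \<exists>Y0. Y = lift n k Y0 \<and> bm X w Y0"
proof (induction arbitrary: k X w rule: bm.induct)
  case (bm_lam b w')
  then obtain b0 where "X = Lam b0" "b = lift n (Suc k) b0" by (cases X) auto
  then show ?case using bm_lam by (auto intro!: exI[of _ "Sub b0 w"] bm.bm_lam)
next
  case (bm_sub X1 w1 Y q)
  then obtain X0 q0 where X: "X = Sub X0 q0" "X1 = lift n (Suc k) X0" "q = lift n k q0"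
    by (cases X) auto
  have "lift 1 0 w1 = lift n (Suc k) (lift 1 0 w)" using bm_sub by (simp add: lift_comm)
  from bm_sub.IH[OF X(2) this] obtain Y0 where "Y = lift n (Suc k) Y0" "bm X0 (lift 1 0 w) Y0" by blast
  then show ?case using X by (auto intro!: exI[of _ "Sub Y0 q0"] bm.bm_sub)
qed

lemma hr_lift: "hr p i w X X' \<Longrightarrow> hr p (li k n i) (lift n k w) (lift n k X) (lift n k X')"
proof (induction arbitrary: k rule: hr.induct)
  case (hr_var p i w) then show ?case by (simp add: li_def hr.hr_var)
next
  case (hr_subl p i w X X' q)
  have "li (Suc k) n (Suc i) = Suc (li k n i)" by (simp add: li_def)
  with hr_subl.IH[of "Suc k"] show ?case by (simp add: hr.hr_subl)
next
  case (hr_subr p a i w X X') then show ?case by (simp add: hr.hr_subr)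
next
  case (hr_appl p i w X X' q) then show ?case by (simp add: hr.hr_appl)
qed

lemma hr_unlift: "hr p i w' X' Y \<Longrightarrow> X' = lift n k X \<Longrightarrow> w' = lift n k w \<Longrightarrow>
   \<exists>i0 Y0. i = li k n i0 \<and> Y = lift n k Y0 \<and> hr p i0 w X Y0"
proof (induction arbitrary: k X w rule: hr.induct)
  case (hr_var p i w')
  then obtain i0 where "X = Var i0" "i = li k n i0" by (cases X) (auto simp: li_def)
  then show ?case using hr_var by (auto intro!: hr.hr_var exI[of _ i0])
next
  case (hr_subl p i w1 X1 X1' q)
  then obtain X0 q0 where X: "X = Sub X0 q0" "X1 = lift n (Suc k) X0" "q = lift n k q0"
    by (cases X) auto
  have "lift 1 0 w1 = lift n (Suc k) (lift 1 0 w)" using hr_subl by (simp add: lift_comm)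
  from hr_subl.IH[OF X(2) this] obtain i0 Y0 where
    Y: "Suc i = li (Suc k) n i0" "X1' = lift n (Suc k) Y0" "hr p i0 (lift 1 0 w) X0 Y0" by blast
  then obtain j where j: "i0 = Suc j" by (cases i0) (auto simp: li_def)
  with Y have "i = li k n j" by (auto simp: li_def split: if_splits)
  then show ?case using X Y j by (auto intro!: exI[of _ "Sub Y0 q0"] hr.hr_subl)
next
  case (hr_subr p a i w1 X1 X1')
  then obtain a0 X0 where X: "X = Sub a0 X0" "a = lift n (Suc k) a0" "X1 = lift n k X0"
    by (cases X) auto
  from hr_subr.IH[OF X(3) hr_subr.prems(2)] obtain i0 Y0 where
    Y: "i = li k n i0" "X1' = lift n k Y0" "hr p i0 w X0 Y0" by blast
  then show ?case using X hr_subr by (auto intro!: exI[of _ "Sub a0 Y0"] hr.hr_subr)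
next
  case (hr_appl p i w1 X1 X1' q)
  then obtain X0 q0 where X: "X = App X0 q0" "X1 = lift n k X0" "q = lift n k q0"
    by (cases X) auto
  from hr_appl.IH[OF X(2) hr_appl.prems(2)] obtain i0 Y0 where
    Y: "i = li k n i0" "X1' = lift n k Y0" "hr MN i0 w X0 Y0" by blast
  then show ?case using X hr_appl by (auto intro!: exI[of _ "App Y0 q0"] hr.hr_appl)
qed

lemma ans_no_hr: "hr p i w a a' \<Longrightarrow> ansf a \<Longrightarrow> False"
  by (induction rule: hr.induct) auto

lemma hr_fvs: "hr p i w X X' \<Longrightarrow> i \<in> fvs X"
  by (induction rule: hr.induct) auto

lemma ans_no_rr: "rr ro a u \<Longrightarrow> ansf a \<Longrightarrow> False"
  by (cases ro) (auto simp: rm'_def re'_def dest: ans_no_hr)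

lemma ans_no_cl: "cl (rr ro) m a u \<Longrightarrow> ansf a \<Longrightarrow> False"
  by (induction rule: cl.induct) (auto dest: ans_no_rr)

lemma rr_lift: "rr ro t u \<Longrightarrow> rr ro (lift n k t) (lift n k u)"
proof (cases ro)
  case None
  assume "rr ro t u"
  then show ?thesis using None by (auto simp: rm'_def dest: bm_lift)
next
  case (Some p)
  assume "rr ro t u"
  then obtain X X' q where "t = Sub X q" "u = Sub X' q" "hr p 0 (lift 1 0 q) X X'"
    using Some by (auto simp: re'_def)
  moreover from hr_lift[OF this(3), of "Suc k" n] have
    "hr p 0 (lift 1 0 (lift n k q)) (lift n (Suc k) X) (lift n (Suc k) X')"
    by (simp add: li_def)
  ultimately show ?thesis using Some by (auto simp: re'_def)
qed

lemma rr_unlift: "rr ro (lift n k t) u \<Longrightarrow> \<exists>u0. u = lift n k u0 \<and> rr ro t u0"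
proof (cases ro)
  case None
  assume "rr ro (lift n k t) u"
  then obtain X w where "lift n k t = App X w" "bm X w u" using None by (auto simp: rm'_def)
  moreover then obtain X0 w0 where "t = App X0 w0" "X = lift n k X0" "w = lift n k w0"
    by (cases t) auto
  moreover from bm_unlift[OF calculation(2) this(2,3)] obtain Y0 where "u = lift n k Y0" "bm X0 w0 Y0"
    by blast
  ultimately show ?thesis using None by (auto simp: rm'_def)
next
  case (Some p)
  assume "rr ro (lift n k t) u"
  then obtain X X' q where h: "lift n k t = Sub X q" "u = Sub X' q" "hr p 0 (lift 1 0 q) X X'"
    using Some by (auto simp: re'_def)
  then obtain X0 q0 where t: "t = Sub X0 q0" "X = lift n (Suc k) X0" "q = lift n k q0"
    by (cases t) auto
  have "lift 1 0 q = lift n (Suc k) (lift 1 0 q0)" using t by simp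
  from hr_unlift[OF h(3) t(2) this] obtain i0 Y0 where
    "0 = li (Suc k) n i0" "X' = lift n (Suc k) Y0" "hr p i0 (lift 1 0 q0) X0 Y0" by blast
  moreover then have "i0 = 0" by (auto simp: li_def split: if_splits)
  ultimately have "u = lift n k (Sub Y0 q0)" "re' p t (Sub Y0 q0)"
    using h t by (auto simp: re'_def)
  then show ?thesis using Some by (metis rr.simps(2))
qed

lemma cl_lift: "cl (rr ro) m t u \<Longrightarrow> cl (rr ro) m (lift n k t) (lift n k u)"
  by (induction arbitrary: k rule: cl.induct) (auto intro: cl.intros rr_lift)

lemma cl_unlift: "cl (rr ro) m t' u \<Longrightarrow> t' = lift n k t \<Longrightarrow> \<exists>u0. u = lift n k u0 \<and> cl (rr ro) m t u0"
proof (induction arbitrary: k t rule: cl.induct)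
  case (cl_root t u m)
  then show ?case using rr_unlift by (blast intro: cl.cl_root)
next
  case (cl_subl m t1 u w)
  then obtain X0 q0 where t: "t = Sub X0 q0" "t1 = lift n (Suc k) X0" "w = lift n k q0"
    by (cases t) auto
  with cl_subl.IH obtain Y0 where "u = lift n (Suc k) Y0" "cl (rr ro) m X0 Y0" by blast
  then show ?case using t by (auto intro!: exI[of _ "Sub Y0 q0"] cl.cl_subl)
next
  case (cl_subr m a t1 u)
  then obtain X0 q0 where t: "t = Sub X0 q0" "a = lift n (Suc k) X0" "t1 = lift n k q0"
    by (cases t) auto
  with cl_subr.IH obtain Y0 where "u = lift n k Y0" "cl (rr ro) m q0 Y0" by blast
  then show ?case using t cl_subr by (auto intro!: exI[of _ "Sub X0 Y0"] cl.cl_subr)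
next
  case (cl_appl m t1 u w)
  then obtain X0 q0 where t: "t = App X0 q0" "t1 = lift n k X0" "w = lift n k q0"
    by (cases t) auto
  with cl_appl.IH obtain Y0 where "u = lift n k Y0" "cl (rr ro) MN X0 Y0" by blast
  then show ?case using t cl_appl by (auto intro!: exI[of _ "App Y0 q0"] cl.cl_appl)
qed

lemma sctx_ans1: "is_sctx S \<Longrightarrow> ansf (plug S T) \<Longrightarrow> ansf T"
  by (induction rule: is_sctx.induct) auto

lemma sctx_ans2: "is_sctx S \<Longrightarrow> ansf (plug S T) \<Longrightarrow> ansf z \<Longrightarrow> ansf (plug S z)"
  by (induction rule: is_sctx.induct) auto

lemma value_ans: "is_value v \<Longrightarrow> ansf v"
  by (cases v) auto

lemma gr_ans_back: "cl gr m t s \<Longrightarrow> ansf s \<Longrightarrow> ansf t"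
proof (induction rule: cl.induct)
  case (cl_root t u m)
  then obtain t0 S v where "is_sctx S" "is_value v" "t = Sub (lift 1 0 t0) (plug S v)"
      "u = plug S (lift (depth S) 0 t0)" by (auto simp: gr_def)
  then show ?case using cl_root sctx_ans1[of S \<open>lift (depth S) 0 t0\<close>] sctx_ans2[of S _ v] value_ans[of v] by simp
qed auto

inductive_cases hr_SubE: "hr p i w (Sub X q) Y"
inductive_cases hr_AppE: "hr p i w (App X q) Y"
inductive_cases cl_SubE: "cl R m (Sub X q) Y"
inductive_cases cl_AppE: "cl R m (App X q) Y"
inductive_cases bm_SubE: "bm (Sub X q) w Y"
inductive_cases bm_AppE: "bm (App X q) w Y"

lemma chain_hr: "is_sctx S \<Longrightarrow> hr p i w (plug S T) X' \<Longrightarrow>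
  (\<exists>T'. X' = plug S T' \<and> hr p (i + depth S) (lift (depth S) 0 w) T T') \<or>
  (p \<noteq> MN \<and> ansf T \<and> (\<exists>S'. is_sctx S' \<and> depth S' = depth S \<and> X' = plug S' T \<and>
      (\<forall>z. ansf z \<longrightarrow> hr p i w (plug S z) (plug S' z))))"
proof (induction arbitrary: i w X' rule: is_sctx.induct)
  case 1 then show ?case by simp
next
  case (2 S u)
  have "hr p i w (Sub (plug S T) u) X'" using 2(3) by simp
  then consider (hr_subl) X1 where "X' = Sub X1 u" "hr p (Suc i) (lift 1 0 w) (plug S T) X1"
    | (hr_subr) X1 where "X' = Sub (plug S T) X1" "p \<noteq> MN" "ansf (plug S T)" "hr p i w u X1"
    by (elim hr_SubE) auto
  then show ?case
  proof cases
    case (hr_subl X1)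
    note IH = "2.IH"[OF hr_subl(2)]
    then show ?thesis
    proof
      assume "\<exists>T'. X1 = plug S T' \<and> hr p (Suc i + depth S) (lift (depth S) 0 (lift 1 0 w)) T T'"
      then show ?thesis using hr_subl by (auto simp: lift_lift)
    next
      assume "p \<noteq> MN \<and> ansf T \<and> (\<exists>S'. is_sctx S' \<and> depth S' = depth S \<and> X1 = plug S' T \<and>
        (\<forall>z. ansf z \<longrightarrow> hr p (Suc i) (lift 1 0 w) (plug S z) (plug S' z)))"
      then obtain S' where "p \<noteq> MN" "ansf T" "is_sctx S'" "depth S' = depth S" "X1 = plug S' T"
        "\<forall>z. ansf z \<longrightarrow> hr p (Suc i) (lift 1 0 w) (plug S z) (plug S' z)" by blast
      then show ?thesis using hr_subl
        by (intro disjI2) (auto intro!: exI[of _ "CSubL S' u"] hr.hr_subl is_sctx.intros)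
    qed
  next
    case (hr_subr X1)
    have "ansf T" using sctx_ans1[OF "2.hyps" hr_subr(3)] .
    moreover have "\<forall>z. ansf z \<longrightarrow> hr p i w (plug (CSubL S u) z) (plug (CSubL S X1) z)"
      using sctx_ans2[OF "2.hyps" hr_subr(3)] hr_subr(2,4) by (simp add: hr.hr_subr)
    moreover have "is_sctx (CSubL S X1)" using "2.hyps" by (rule is_sctx.intros)
    ultimately show ?thesis using hr_subr(1,2)
      by (intro disjI2 conjI exI[of _ "CSubL S X1"]) simp_all
  qed
qed

lemma chain_cl: "is_sctx S \<Longrightarrow> cl (rr ro) m (plug S T) u \<Longrightarrow> (\<forall>i<depth S. i \<notin> fvs T) \<Longrightarrow>
  (\<forall>p. ro = Some p \<and> p \<noteq> MN \<longrightarrow> m \<noteq> MN) \<Longrightarrow>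
  (\<exists>T'. u = plug S T' \<and> cl (rr ro) m T T') \<or>
  (m \<noteq> MN \<and> ansf T \<and> (\<exists>S'. is_sctx S' \<and> depth S' = depth S \<and> u = plug S' T \<and>
      (\<forall>z. ansf z \<longrightarrow> cl (rr ro) m (plug S z) (plug S' z))))"
proof (induction arbitrary: u rule: is_sctx.induct)
  case 1 then show ?case by simp
next
  case (2 S q)
  have "cl (rr ro) m (Sub (plug S T) q) u" using 2(3) by simp
  then consider (cl_root) "rr ro (Sub (plug S T) q) u"
    | (cl_subl) X1 where "u = Sub X1 q" "cl (rr ro) m (plug S T) X1"
    | (cl_subr) X1 where "u = Sub (plug S T) X1" "m \<noteq> MN" "ansf (plug S T)" "cl (rr ro) m q X1"
    by (elim cl_SubE) auto
  then show ?case
  proof cases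
    case cl_root
    show ?thesis
    proof (cases ro)
      case None then show ?thesis using cl_root by (auto simp: rm'_def)
    next
      case (Some p)
      then obtain X' where u: "u = Sub X' q" and h: "hr p 0 (lift 1 0 q) (plug S T) X'"
        using cl_root by (auto simp: re'_def)
      from chain_hr[OF "2.hyps" h] show ?thesis
      proof
        assume "\<exists>T'. X' = plug S T' \<and> hr p (0 + depth S) (lift (depth S) 0 (lift 1 0 q)) T T'"
        then have "depth S \<in> fvs T" using hr_fvs by fastforce
        then show ?thesis using "2.prems"(2) by simp
      next
        assume "p \<noteq> MN \<and> ansf T \<and> (\<exists>S'. is_sctx S' \<and> depth S' = depth S \<and> X' = plug S' T \<and>
          (\<forall>z. ansf z \<longrightarrow> hr p 0 (lift 1 0 q) (plug S z) (plug S' z)))"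
        then obtain S' where "p \<noteq> MN" "ansf T" "is_sctx S'" "depth S' = depth S" "X' = plug S' T"
          "\<forall>z. ansf z \<longrightarrow> hr p 0 (lift 1 0 q) (plug S z) (plug S' z)" by blast
        moreover have "m \<noteq> MN" using "2.prems"(3) Some \<open>p \<noteq> MN\<close> by blast
        ultimately show ?thesis using u Some
          by (intro disjI2) (auto intro!: exI[of _ "CSubL S' q"] cl.cl_root is_sctx.intros simp: re'_def)
      qed
    qed
  next
    case (cl_subl X1)
    have "\<forall>i<depth S. i \<notin> fvs T" using "2.prems"(2) by simp
    note IH = "2.IH"[OF cl_subl(2) this "2.prems"(3)]
    then show ?thesis
    proof
      assume "\<exists>T'. X1 = plug S T' \<and> cl (rr ro) m T T'"
      then show ?thesis using cl_subl by auto
    next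
      assume "m \<noteq> MN \<and> ansf T \<and> (\<exists>S'. is_sctx S' \<and> depth S' = depth S \<and> X1 = plug S' T \<and>
        (\<forall>z. ansf z \<longrightarrow> cl (rr ro) m (plug S z) (plug S' z)))"
      then obtain S' where "m \<noteq> MN" "ansf T" "is_sctx S'" "depth S' = depth S" "X1 = plug S' T"
        "\<forall>z. ansf z \<longrightarrow> cl (rr ro) m (plug S z) (plug S' z)" by blast
      then show ?thesis using cl_subl
        by (intro disjI2) (auto intro!: exI[of _ "CSubL S' q"] cl.cl_subl is_sctx.intros)
    qed
  next
    case (cl_subr X1)
    have "ansf T" using sctx_ans1[OF "2.hyps" cl_subr(3)] .
    moreover have "\<forall>z. ansf z \<longrightarrow> cl (rr ro) m (plug (CSubL S q) z) (plug (CSubL S X1) z)"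
      using sctx_ans2[OF "2.hyps" cl_subr(3)] cl_subr(2,4) by (simp add: cl.cl_subr)
    moreover have "is_sctx (CSubL S X1)" using "2.hyps" by (rule is_sctx.intros)
    ultimately show ?thesis using cl_subr(1,2)
      by (intro disjI2 conjI exI[of _ "CSubL S X1"]) simp_all
  qed
qed

lemma gr_intro: "is_sctx S \<Longrightarrow> is_value v \<Longrightarrow> gr (Sub (lift 1 0 t0) (plug S v)) (plug S (lift (depth S) 0 t0))"
  unfolding gr_def by blast

lemma hr_swap: "cl gr mG t s \<Longrightarrow> hr p i w s s' \<Longrightarrow> \<exists>t'. hr p i w t t' \<and> cl gr mG t' s'"
proof (induction arbitrary: p i w s' rule: cl.induct)
  case (cl_root t s m)
  then obtain t0 S v where S: "is_sctx S" "is_value v" and t: "t = Sub (lift 1 0 t0) (plug S v)"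
    and s: "s = plug S (lift (depth S) 0 t0)" by (auto simp: gr_def)
  from chain_hr[OF S(1) cl_root.prems[unfolded s]] show ?case
  proof
    assume "\<exists>T'. s' = plug S T' \<and> hr p (i + depth S) (lift (depth S) 0 w) (lift (depth S) 0 t0) T'"
    then obtain T' where s': "s' = plug S T'" and h: "hr p (i + depth S) (lift (depth S) 0 w) (lift (depth S) 0 t0) T'"
      by blast
    from hr_unlift[OF h refl refl] obtain i0 Y0 where
      "i + depth S = li 0 (depth S) i0" "T' = lift (depth S) 0 Y0" "hr p i0 w t0 Y0" by blast
    moreover then have "i0 = i" by (simp add: li_def)
    ultimately have T': "T' = lift (depth S) 0 Y0" and h0: "hr p i w t0 Y0" by auto
    from hr_lift[OF h0, of 0 1] have "hr p (Suc i) (lift 1 0 w) (lift 1 0 t0) (lift 1 0 Y0)"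
      by (simp add: li_def)
    then have "hr p i w t (Sub (lift 1 0 Y0) (plug S v))" unfolding t by (rule hr.hr_subl)
    moreover have "cl gr m (Sub (lift 1 0 Y0) (plug S v)) s'"
      unfolding s' T' by (rule cl.cl_root, rule gr_intro[OF S])
    ultimately show ?thesis by blast
  next
    assume "p \<noteq> MN \<and> ansf (lift (depth S) 0 t0) \<and> (\<exists>S'. is_sctx S' \<and> depth S' = depth S \<and> s' = plug S' (lift (depth S) 0 t0) \<and>
      (\<forall>z. ansf z \<longrightarrow> hr p i w (plug S z) (plug S' z)))"
    then obtain S' where "p \<noteq> MN" "ansf t0" "is_sctx S'" "depth S' = depth S"
      "s' = plug S' (lift (depth S) 0 t0)" "\<forall>z. ansf z \<longrightarrow> hr p i w (plug S z) (plug S' z)" by auto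
    moreover have "ansf v" using S(2) by (rule value_ans)
    ultimately have "hr p i w t (Sub (lift 1 0 t0) (plug S' v))"
      unfolding t by (auto intro!: hr.hr_subr)
    moreover have "cl gr m (Sub (lift 1 0 t0) (plug S' v)) s'"
      using gr_intro[OF \<open>is_sctx S'\<close> S(2), of t0] \<open>depth S' = depth S\<close> \<open>s' = _\<close>
      by (auto intro: cl.cl_root)
    ultimately show ?thesis by blast
  qed
next
  case (cl_subl m t1 s1 w0)
  from cl_subl.prems consider (L) X1 where "s' = Sub X1 w0" "hr p (Suc i) (lift 1 0 w) s1 X1"
    | (R) X1 where "s' = Sub s1 X1" "p \<noteq> MN" "ansf s1" "hr p i w w0 X1"
    by (elim hr_SubE) auto
  then show ?case
  proof cases
    case (L X1)
    with cl_subl.IH obtain t1' where "hr p (Suc i) (lift 1 0 w) t1 t1'" "cl gr m t1' X1" by blast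
    then show ?thesis using L by (blast intro: hr.hr_subl cl.cl_subl)
  next
    case (R X1)
    have "ansf t1" using gr_ans_back[OF cl_subl.hyps R(3)] .
    then show ?thesis using R cl_subl.hyps by (blast intro: hr.hr_subr cl.cl_subl)
  qed
next
  case (cl_subr m a t2 s2)
  from cl_subr.prems consider (L) X1 where "s' = Sub X1 s2" "hr p (Suc i) (lift 1 0 w) a X1"
    | (R) X1 where "s' = Sub a X1" "p \<noteq> MN" "ansf a" "hr p i w s2 X1"
    by (elim hr_SubE) auto
  then show ?case
  proof cases
    case (L X1) then show ?thesis using cl_subr.hyps(2) ans_no_hr by blast
  next
    case (R X1)
    with cl_subr.IH obtain t2' where "hr p i w t2 t2'" "cl gr m t2' X1" by blast
    then show ?thesis using R cl_subr.hyps by (blast intro: hr.hr_subr cl.cl_subr)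
  qed
next
  case (cl_appl m t1 s1 w0)
  from cl_appl.prems obtain X1 where "s' = App X1 w0" "p \<noteq> MA" "hr MN i w s1 X1"
    by (elim hr_AppE) auto
  moreover with cl_appl.IH obtain t1' where "hr MN i w t1 t1'" "cl gr MN t1' X1" by blast
  ultimately show ?case using cl_appl.hyps by (blast intro: hr.hr_appl cl.cl_appl)
qed

lemma bm_chain: "is_sctx S \<Longrightarrow> bm (plug S T) w Y \<Longrightarrow> \<exists>Z. bm T (lift (depth S) 0 w) Z \<and> Y = plug S Z"
proof (induction arbitrary: w Y rule: is_sctx.induct)
  case 1 then show ?case by simp
next
  case (2 S u)
  from "2.prems" obtain Y1 where "Y = Sub Y1 u" "bm (plug S T) (lift 1 0 w) Y1"
    by (auto elim: bm_SubE)
  moreover from "2.IH"[OF this(2)] obtain Z where "bm T (lift (depth S) 0 (lift 1 0 w)) Z" "Y1 = plug S Z"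
    by blast
  moreover have "lift (depth S) 0 (lift 1 0 w) = lift (Suc (depth S)) 0 w" by (simp add: lift_lift)
  ultimately show ?case by auto
qed

lemma bm_swap: "cl gr m t s \<Longrightarrow> m = MN \<Longrightarrow> bm s w Y \<Longrightarrow> \<exists>t'. bm t w t' \<and> (\<forall>m'. cl gr m' t' Y)"
proof (induction arbitrary: w Y rule: cl.induct)
  case (cl_root t s m)
  then obtain t0 S v where S: "is_sctx S" "is_value v" and t: "t = Sub (lift 1 0 t0) (plug S v)"
    and s: "s = plug S (lift (depth S) 0 t0)" by (auto simp: gr_def)
  from bm_chain[OF S(1) cl_root.prems(2)[unfolded s]] obtain Z where
    Z: "bm (lift (depth S) 0 t0) (lift (depth S) 0 w) Z" "Y = plug S Z" by blast
  from bm_unlift[OF Z(1) refl refl] obtain Z0 where Z0: "Z = lift (depth S) 0 Z0" "bm t0 w Z0" by blast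
  from bm_lift[OF Z0(2), of 1 0] have "bm t w (Sub (lift 1 0 Z0) (plug S v))"
    unfolding t by (rule bm.bm_sub)
  moreover have "\<forall>m'. cl gr m' (Sub (lift 1 0 Z0) (plug S v)) Y"
    unfolding Z(2) Z0(1) using gr_intro[OF S] by (blast intro: cl.cl_root)
  ultimately show ?case by blast
next
  case (cl_subl m t1 s1 q)
  from cl_subl.prems(2) obtain Y1 where "Y = Sub Y1 q" "bm s1 (lift 1 0 w) Y1"
    by (auto elim: bm_SubE)
  moreover with cl_subl.IH cl_subl.prems(1) obtain t' where "bm t1 (lift 1 0 w) t'" "\<forall>m'. cl gr m' t' Y1"
    by blast
  ultimately show ?case by (blast intro: bm.bm_sub cl.cl_subl)
next
  case (cl_subr m a t s) then show ?case by simp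
next
  case (cl_appl m t u w) then show ?case by (auto elim: bm_AppE)
qed

lemma swap_cl: "cl gr mG t s \<Longrightarrow> cl (rr ro) mN s u \<Longrightarrow> (\<forall>p. ro = Some p \<and> p \<noteq> MN \<longrightarrow> mN = MA) \<Longrightarrow>
  \<exists>s'. cl (rr ro) mN t s' \<and> cl gr mG s' u"
proof (induction arbitrary: mN u rule: cl.induct)
  case (cl_root t s m)
  then obtain t0 S v where S: "is_sctx S" "is_value v" and t: "t = Sub (lift 1 0 t0) (plug S v)"
    and s: "s = plug S (lift (depth S) 0 t0)" by (auto simp: gr_def)
  have fv: "\<forall>i<depth S. i \<notin> fvs (lift (depth S) 0 t0)" using fvs_lift by fastforce
  have md: "\<forall>p. ro = Some p \<and> p \<noteq> MN \<longrightarrow> mN \<noteq> MN" using cl_root.prems(2) by auto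
  from chain_cl[OF S(1) cl_root.prems(1)[unfolded s] fv md] show ?case
  proof
    assume "\<exists>T'. u = plug S T' \<and> cl (rr ro) mN (lift (depth S) 0 t0) T'"
    then obtain T' where u: "u = plug S T'" and h: "cl (rr ro) mN (lift (depth S) 0 t0) T'" by blast
    from cl_unlift[OF h refl] obtain U0 where U0: "T' = lift (depth S) 0 U0" "cl (rr ro) mN t0 U0" by blast
    from cl_lift[OF U0(2), of 1 0] have "cl (rr ro) mN t (Sub (lift 1 0 U0) (plug S v))"
      unfolding t by (rule cl.cl_subl)
    moreover have "cl gr m (Sub (lift 1 0 U0) (plug S v)) u"
      unfolding u U0(1) by (rule cl.cl_root, rule gr_intro[OF S])
    ultimately show ?thesis by blast
  next
    assume "mN \<noteq> MN \<and> ansf (lift (depth S) 0 t0) \<and> (\<exists>S'. is_sctx S' \<and> depth S' = depth S \<and> u = plug S' (lift (depth S) 0 t0) \<and>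
      (\<forall>z. ansf z \<longrightarrow> cl (rr ro) mN (plug S z) (plug S' z)))"
    then obtain S' where "mN \<noteq> MN" "ansf t0" "is_sctx S'" "depth S' = depth S"
      "u = plug S' (lift (depth S) 0 t0)" "\<forall>z. ansf z \<longrightarrow> cl (rr ro) mN (plug S z) (plug S' z)" by auto
    moreover have "ansf v" using S(2) by (rule value_ans)
    ultimately have "cl (rr ro) mN t (Sub (lift 1 0 t0) (plug S' v))"
      unfolding t by (auto intro!: cl.cl_subr)
    moreover have "cl gr m (Sub (lift 1 0 t0) (plug S' v)) u"
      using gr_intro[OF \<open>is_sctx S'\<close> S(2), of t0] \<open>depth S' = depth S\<close> \<open>u = _\<close>
      by (auto intro: cl.cl_root)
    ultimately show ?thesis by blast
  qed
next
  case (cl_subl m t1 s1 w0)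
  from cl_subl.prems(1) consider (Rt) "rr ro (Sub s1 w0) u"
    | (L) X1 where "u = Sub X1 w0" "cl (rr ro) mN s1 X1"
    | (R) X1 where "u = Sub s1 X1" "mN \<noteq> MN" "ansf s1" "cl (rr ro) mN w0 X1"
    by (elim cl_SubE) auto
  then show ?case
  proof cases
    case Rt
    show ?thesis
    proof (cases ro)
      case None then show ?thesis using Rt by (auto simp: rm'_def)
    next
      case (Some p)
      then obtain X' where u: "u = Sub X' w0" and h: "hr p 0 (lift 1 0 w0) s1 X'"
        using Rt by (auto simp: re'_def)
      from hr_swap[OF cl_subl.hyps h] obtain t1' where "hr p 0 (lift 1 0 w0) t1 t1'" "cl gr m t1' X'"
        by blast
      then have "rr ro (Sub t1 w0) (Sub t1' w0)" "cl gr m (Sub t1' w0) u"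
        using Some u by (auto simp: re'_def intro: cl.cl_subl)
      then show ?thesis by (blast intro: cl.cl_root)
    qed
  next
    case (L X1)
    with cl_subl.IH cl_subl.prems(2) obtain s' where "cl (rr ro) mN t1 s'" "cl gr m s' X1" by blast
    then show ?thesis using L by (blast intro: cl.cl_subl)
  next
    case (R X1)
    have "ansf t1" using gr_ans_back[OF cl_subl.hyps R(3)] .
    then show ?thesis using R cl_subl.hyps by (blast intro: cl.cl_subr cl.cl_subl)
  qed
next
  case (cl_subr m a t2 s2)
  from cl_subr.prems(1) consider (Rt) "rr ro (Sub a s2) u"
    | (L) X1 where "u = Sub X1 s2" "cl (rr ro) mN a X1"
    | (R) X1 where "u = Sub a X1" "mN \<noteq> MN" "ansf a" "cl (rr ro) mN s2 X1"
    by (elim cl_SubE) auto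
  then show ?case
  proof cases
    case Rt
    show ?thesis
    proof (cases ro)
      case None then show ?thesis using Rt by (auto simp: rm'_def)
    next
      case (Some p)
      then show ?thesis using Rt cl_subr.hyps(2) by (auto simp: re'_def dest: ans_no_hr)
    qed
  next
    case (L X1) then show ?thesis using cl_subr.hyps(2) ans_no_cl by blast
  next
    case (R X1)
    with cl_subr.IH cl_subr.prems(2) obtain s' where "cl (rr ro) mN t2 s'" "cl gr m s' X1" by blast
    then show ?thesis using R cl_subr.hyps by (blast intro: cl.cl_subr)
  qed
next
  case (cl_appl m t1 s1 w0)
  from cl_appl.prems(1) consider (Rt) "rr ro (App s1 w0) u"
    | (L) X1 where "u = App X1 w0" "mN \<noteq> MA" "cl (rr ro) MN s1 X1"
    by (elim cl_AppE) auto
  then show ?case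
  proof cases
    case Rt
    show ?thesis
    proof (cases ro)
      case None
      then have "bm s1 w0 u" using Rt by (auto simp: rm'_def)
      from bm_swap[OF cl_appl.hyps(2) refl this] obtain t' where "bm t1 w0 t'" "\<forall>m'. cl gr m' t' u"
        by blast
      then show ?thesis using None by (auto simp: rm'_def intro: cl.cl_root)
    next
      case (Some p)
      then show ?thesis using Rt by (auto simp: re'_def)
    qed
  next
    case (L X1)
    then have "\<forall>p. ro = Some p \<and> p \<noteq> MN \<longrightarrow> MN = MA" using cl_appl.prems(2) by auto
    with L cl_appl.IH obtain s' where "cl (rr ro) MN t1 s'" "cl gr MN s' X1" by blast
    then show ?thesis using L cl_appl.hyps by (blast intro: cl.cl_appl)
  qed
qed

fun okctx :: "md \<Rightarrow> ctx \<Rightarrow> bool" where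
  "okctx m Hole = True"
| "okctx m (CSubL C t) = okctx m C"
| "okctx m (CSubR a C) = (m \<noteq> MN \<and> ansf a \<and> okctx m C)"
| "okctx m (CAppL C t) = (m \<noteq> MA \<and> okctx MN C)"
| "okctx m (CLam C) = False"
| "okctx m (CAppR t C) = False"

lemma cl_ctx: "cl R m t u \<longleftrightarrow> (\<exists>C t' u'. okctx m C \<and> R t' u' \<and> t = plug C t' \<and> u = plug C u')"
proof
  show "cl R m t u \<Longrightarrow> \<exists>C t' u'. okctx m C \<and> R t' u' \<and> t = plug C t' \<and> u = plug C u'"
  proof (induction rule: cl.induct)
    case (cl_root t u m) then show ?case by (intro exI[of _ Hole]) auto
  next
    case (cl_subl m t u w)
    then obtain C t' u' where "okctx m C" "R t' u'" "t = plug C t'" "u = plug C u'" by blast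
    then show ?case by (intro exI[of _ "CSubL C w"]) auto
  next
    case (cl_subr m a t u)
    then obtain C t' u' where "okctx m C" "R t' u'" "t = plug C t'" "u = plug C u'" by blast
    then show ?case using cl_subr by (intro exI[of _ "CSubR a C"]) auto
  next
    case (cl_appl m t u w)
    then obtain C t' u' where "okctx MN C" "R t' u'" "t = plug C t'" "u = plug C u'" by blast
    then show ?case using cl_appl by (intro exI[of _ "CAppL C w"]) auto
  qed
next
  assume "\<exists>C t' u'. okctx m C \<and> R t' u' \<and> t = plug C t' \<and> u = plug C u'"
  then obtain C t' u' where "okctx m C" "R t' u'" "t = plug C t'" "u = plug C u'" by blast
  then show "cl R m t u"
    by (induction C arbitrary: m t u) (auto intro: cl.intros)
qed

lemma nctx_ok: "is_nctx C \<longleftrightarrow> okctx MN C"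
proof
  show "is_nctx C \<Longrightarrow> okctx MN C" by (induction rule: is_nctx.induct) auto
  show "okctx MN C \<Longrightarrow> is_nctx C" by (induction C) (auto intro: is_nctx.intros)
qed

lemma actx_ok: "is_actx C \<longleftrightarrow> okctx MA C"
proof
  show "is_actx C \<Longrightarrow> okctx MA C" by (induction rule: is_actx.induct) (auto simp: ans_eq)
  show "okctx MA C \<Longrightarrow> is_actx C" by (induction C) (auto intro: is_actx.intros simp: ans_eq)
qed

lemma okN_Y: "okctx MN C \<Longrightarrow> okctx MY C"
  by (induction C) auto

lemma yctx_ok: "is_yctx C \<longleftrightarrow> okctx MY C"
proof
  assume "is_yctx C"
  then obtain A N where "is_actx A" "is_nctx N" "C = ccomp A N" by (auto simp: is_yctx_def)
  then show "okctx MY C"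
    by (induction A arbitrary: C rule: is_actx.induct) (auto simp: nctx_ok ans_eq okN_Y)
next
  show "okctx MY C \<Longrightarrow> is_yctx C"
  proof (induction C)
    case Hole then show ?case unfolding is_yctx_def
      by (intro exI[of _ Hole]) (auto intro: is_actx.intros is_nctx.intros)
  next
    case (CSubL C t)
    then obtain A N where "is_actx A" "is_nctx N" "C = ccomp A N" by (auto simp: is_yctx_def)
    then show ?case unfolding is_yctx_def
      by (intro exI[of _ "CSubL A t"] exI[of _ N]) (auto intro: is_actx.intros)
  next
    case (CSubR a C)
    then obtain A N where "is_actx A" "is_nctx N" "C = ccomp A N" by (auto simp: is_yctx_def)
    then show ?case unfolding is_yctx_def using CSubR.prems
      by (intro exI[of _ "CSubR a A"] exI[of _ N]) (auto intro: is_actx.intros simp: ans_eq)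
  next
    case (CAppL C t)
    then have "is_nctx (CAppL C t)" by (auto simp: nctx_ok)
    then show ?case unfolding is_yctx_def
      by (intro exI[of _ Hole] exI[of _ "CAppL C t"]) (auto intro: is_actx.intros)
  qed auto
qed

lemma bm_iff: "bm X w Y \<longleftrightarrow> (\<exists>S b. is_sctx S \<and> X = plug S (Lam b) \<and> Y = plug S (Sub b (lift (depth S) 0 w)))"
proof
  show "bm X w Y \<Longrightarrow> \<exists>S b. is_sctx S \<and> X = plug S (Lam b) \<and> Y = plug S (Sub b (lift (depth S) 0 w))"
  proof (induction rule: bm.induct)
    case (bm_lam b w) then show ?case by (intro exI[of _ Hole]) (auto intro: is_sctx.intros)
  next
    case (bm_sub X w Y q)
    then obtain S b where "is_sctx S" "X = plug S (Lam b)" "Y = plug S (Sub b (lift (depth S) 0 (lift 1 0 w)))"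
      by blast
    then show ?case by (intro exI[of _ "CSubL S q"] exI[of _ b]) (auto intro: is_sctx.intros simp: lift_lift)
  qed
next
  assume "\<exists>S b. is_sctx S \<and> X = plug S (Lam b) \<and> Y = plug S (Sub b (lift (depth S) 0 w))"
  then obtain S b where "is_sctx S" "X = plug S (Lam b)" "Y = plug S (Sub b (lift (depth S) 0 w))" by blast
  then show "bm X w Y"
  proof (induction S arbitrary: X Y w rule: is_sctx.induct)
    case 1 then show ?case by (simp add: bm.bm_lam)
  next
    case (2 S u)
    have "bm (plug S (Lam b)) (lift 1 0 w) (plug S (Sub b (lift (depth S) 0 (lift 1 0 w))))"
      using "2.IH" by blast
    from bm.bm_sub[OF this, of u]
    have "bm (Sub (plug S (Lam b)) u) w (Sub (plug S (Sub b (lift (depth S) 0 (lift 1 0 w)))) u)" .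
    moreover have "lift (depth S) 0 (lift 1 0 w) = lift (Suc (depth S)) 0 w" by (simp add: lift_lift)
    ultimately show ?case using "2.prems" by simp
  qed
qed

lemma root_m_eq: "root_m = rm'"
  by (intro ext) (auto simp: root_m_def rm'_def bm_iff)

lemma hr_iff: "hr p i w X X' \<longleftrightarrow> (\<exists>K. okctx p K \<and> X = plug K (Var (i + depth K)) \<and> X' = plug K (lift (depth K) 0 w))"
proof
  show "hr p i w X X' \<Longrightarrow> \<exists>K. okctx p K \<and> X = plug K (Var (i + depth K)) \<and> X' = plug K (lift (depth K) 0 w)"
  proof (induction rule: hr.induct)
    case (hr_var p i w) then show ?case by (intro exI[of _ Hole]) auto
  next
    case (hr_subl p i w X X' q)
    then obtain K where "okctx p K" "X = plug K (Var (Suc i + depth K))" "X' = plug K (lift (depth K) 0 (lift 1 0 w))"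
      by blast
    then show ?case by (intro exI[of _ "CSubL K q"]) (auto simp: lift_lift)
  next
    case (hr_subr p a i w X X')
    then obtain K where "okctx p K" "X = plug K (Var (i + depth K))" "X' = plug K (lift (depth K) 0 w)"
      by blast
    then show ?case using hr_subr by (intro exI[of _ "CSubR a K"]) auto
  next
    case (hr_appl p i w X X' q)
    then obtain K where "okctx MN K" "X = plug K (Var (i + depth K))" "X' = plug K (lift (depth K) 0 w)"
      by blast
    then show ?case using hr_appl by (intro exI[of _ "CAppL K q"]) auto
  qed
next
  assume "\<exists>K. okctx p K \<and> X = plug K (Var (i + depth K)) \<and> X' = plug K (lift (depth K) 0 w)"
  then obtain K where "okctx p K" "X = plug K (Var (i + depth K))" "X' = plug K (lift (depth K) 0 w)" by blast
  then show "hr p i w X X'"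
  proof (induction K arbitrary: p i w X X')
    case Hole then show ?case by (simp add: hr.hr_var)
  next
    case (CSubL K t)
    have "hr p (Suc i) (lift 1 0 w) (plug K (Var (Suc i + depth K))) (plug K (lift (depth K) 0 (lift 1 0 w)))"
      using CSubL by (intro CSubL.IH) auto
    then show ?case using CSubL.prems by (auto intro: hr.hr_subl simp: lift_lift)
  next
    case (CSubR a K) then show ?case by (auto intro: hr.hr_subr)
  next
    case (CAppL K t) then show ?case by (auto intro: hr.hr_appl)
  qed auto
qed

lemma root_e_eq: "root_e (okctx p) = re' p"
  by (intro ext) (auto simp: root_e_def re'_def hr_iff plugnc_def)

lemma root_gcv_eq: "root_gcv = gr"
proof (intro ext iffI)
  fix t u assume "root_gcv t u" then show "gr t u" by (auto simp: root_gcv_def gr_def)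
next
  fix t u assume "gr t u"
  then obtain t0 S v where "is_sctx S" "is_value v" "t = Sub (lift 1 0 t0) (plug S v)"
      "u = plug S (lift (depth S) 0 t0)" by (auto simp: gr_def)
  moreover have "0 \<notin> fvs (lift 1 0 t0)" using fvs_lift[of 0 1 0 t0] by auto
  ultimately show "root_gcv t u" unfolding root_gcv_def by blast
qed

lemma ctx_clos_eq: "ctx_clos (okctx m) R = cl R m"
  by (intro ext) (simp add: ctx_clos_def cl_ctx)

lemma rel_eqs:
  "ym = cl (rr None) MY" "yeAY = cl (rr (Some MY)) MA" "yeYN = cl (rr (Some MN)) MY" "ygcv = cl gr MY"
proof -
  have y: "is_yctx = okctx MY" and a: "is_actx = okctx MA" and n: "is_nctx = okctx MN"
    by (auto simp: yctx_ok actx_ok nctx_ok)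
  show "ym = cl (rr None) MY" "yeAY = cl (rr (Some MY)) MA" "yeYN = cl (rr (Some MN)) MY" "ygcv = cl gr MY"
    unfolding ym_def yeAY_def yeYN_def ygcv_def y a n ctx_clos_eq root_m_eq root_e_eq root_gcv_eq
    by simp_all
qed

lemma swap1: "ygcv t s \<Longrightarrow> ynotgcv s u \<Longrightarrow> \<exists>s'. ynotgcv t s' \<and> ygcv s' u"
  unfolding ynotgcv_def rel_eqs
  by (elim disjE; drule (1) swap_cl; auto)

lemma swap_pow: "ygcv t s \<Longrightarrow> (ynotgcv ^^ k) s s1 \<Longrightarrow> \<exists>s2. (ynotgcv ^^ k) t s2 \<and> ygcv s2 s1"
proof (induction k arbitrary: t s)
  case 0 then show ?case by auto
next
  case (Suc k)
  from relpowp_Suc_D2[OF Suc.prems(2)] obtain y where "ynotgcv s y" "(ynotgcv ^^ k) y s1" by blast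
  moreover from swap1[OF Suc.prems(1) this(1)] obtain s' where "ynotgcv t s'" "ygcv s' y" by blast
  moreover from Suc.IH[OF this(2) calculation(2)] obtain s2 where "(ynotgcv ^^ k) s' s2" "ygcv s2 s1" by blast
  ultimately show ?case by (blast intro: relpowp_Suc_I2)
qed

theorem proposition11p6:
  assumes "yder t u k h"
  shows "\<exists>s. (ynotgcv ^^ k) t s \<and> (ygcv ^^ h) s u"
  using assms
proof (induction rule: yder.induct)
  case (yder_refl t) then show ?case by auto
next
  case (yder_notgcv t s u k h)
  then obtain s1 where "(ynotgcv ^^ k) s s1" "(ygcv ^^ h) s1 u" by blast
  then show ?case using yder_notgcv(1) by (blast intro: relpowp_Suc_I2)
next
  case (yder_gcv t s u k h)
  then obtain s1 where "(ynotgcv ^^ k) s s1" "(ygcv ^^ h) s1 u" by blast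
  moreover from swap_pow[OF yder_gcv(1) this(1)] obtain s2 where "(ynotgcv ^^ k) t s2" "ygcv s2 s1" by blast
  ultimately show ?case by (blast intro: relpowp_Suc_I2)
qed

end
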